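(* Let $m\ge0$ be an integer, $w_0\in L_{2m}$ the basis vector of weight $0$, $\mu$ generic, and $\Phi^{w_0,\mathrm{trig}}_\mu$ as in the context. If $|q^{-2\lambda}|$ is sufficiently small, the trace $\mathrm{Tr}|_{M_\mu}(\Phi^{w_0,\mathrm{trig}}_\mu q^{2\lambda\rho})$ converges and \[ \mathrm{Tr}|_{M_\mu}(\Phi^{w_0,\mathrm{trig}}_\mu q^{2\lambda\rho})=q^{\lambda\mu}\sum_{l=0}^m(-1)^lq^{-2\lambda l}q^{-l(l-1)/2}\frac{[m]_l[m+l]_l}{[l]_l}\frac{(q-q^{-1})^l}{\prod_{i=0}^{l-1}(1-q^{-2\mu+2i})\prod_{i=0}^l(1-q^{-2\lambda-2i})}. \]
   Context: $q\in\mathbb{C}^\times$ transcendental over $\mathbb{Q}$, $q^x:=e^{x\log q}$, $[n]=\frac{q^n-q^{-n}}{q-q^{-1}}$, $[n]_l=[n][n-1]\cdots[n-l+1]$. $U_q(\mathfrak{sl}_2)$ is generated by $e,f,q^h$ with $q^heq^{-h}=q^2e$, $q^hfq^{-h}=q^{-2}f$, $[e,f]=\frac{q^h-q^{-h}}{q-q^{-1}}$, coproduct $\Delta(e)=e\otimes1+q^h\otimes e$, $\Delta(f)=f\otimes q^{-h}+1\otimes f$, $\Delta(q^h)=q^h\otimes q^h$. $M_\mu$ is the Verma module with basis $f^jv_\mu$ ($j\ge0$): $ef^jv_\mu=[\mu-j+1][j]f^{j-1}v_\mu$, $f\cdot f^jv_\mu=f^{j+1}v_\mu$, $q^hf^jv_\mu=q^{\mu-2j}f^jv_\mu$.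 $L_{2m}$ is the irreducible module with basis $w_{2j}$, $-m\le j\le m$: $ew_{2j}=[m-j]w_{2j+2}$, $fw_{2j}=[m+j]w_{2j-2}$, $q^hw_{2j}=q^{2j}w_{2j}$. $\Phi^{w_0,\mathrm{trig}}_\mu:M_\mu\to M_\mu\widehat\otimes L_{2m}$ is the unique intertwiner with $v_\mu\mapsto v_\mu\otimes w_0+$ terms of lower weight in the first factor. $q^{2\lambda\rho}$ acts on $f^jv_\mu$ by $q^{\lambda(\mu-2j)}$; the trace is valued in $L_{2m}[0]=\mathbb{C}w_0\cong\mathbb{C}$. *)

theory Defs
  imports "HOL-Analysis.Analysis" "HOL-Computational_Algebra.Polynomial"
begin

text \<open>Conventions. A logarithm L of q is fixed, q = exp L, and
  q^x := exp (x * L) for complex x.\<close>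

definition qpow :: "complex \<Rightarrow> complex \<Rightarrow> complex" where
  "qpow L x = exp (x * L)"

definition qint :: "complex \<Rightarrow> complex \<Rightarrow> complex" where
  "qint L x = (qpow L x - qpow L (- x)) / (qpow L 1 - qpow L (- 1))"

definition qfall :: "complex \<Rightarrow> complex \<Rightarrow> nat \<Rightarrow> complex" where
  "qfall L n l = (\<Prod>i<l. qint L (n - of_nat i))"

text \<open>Elements of the completed tensor product M_mu (completed) L_{2m} are represented by
  coefficient functions T k i = coefficient of (f^k v_mu) tensor w_{2i}
  (only -m \<le> i \<le> m is meaningful; infinite sums in k are allowed).
  Below: the actions of Delta(e), Delta(f), Delta(q^h) on such elements.\<close>

definition actE :: "complex \<Rightarrow> complex \<Rightarrow> nat \<Rightarrow> (nat \<Rightarrow> int \<Rightarrow> complex) \<Rightarrow> (nat \<Rightarrow> int \<Rightarrow> complex)" where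
  "actE L \<mu> m T = (\<lambda>k i.
     if - int m \<le> i \<and> i \<le> int m then
       T (Suc k) i * qint L (\<mu> - of_nat k) * qint L (of_nat (Suc k))
       + (if - int m \<le> i - 1 then T k (i - 1) * qpow L (\<mu> - 2 * of_nat k) * qint L (of_int (int m - i + 1)) else 0)
     else 0)"

definition actF :: "complex \<Rightarrow> nat \<Rightarrow> (nat \<Rightarrow> int \<Rightarrow> complex) \<Rightarrow> (nat \<Rightarrow> int \<Rightarrow> complex)" where
  "actF L m T = (\<lambda>k i.
     if - int m \<le> i \<and> i \<le> int m then
       (if k \<ge> 1 then T (k - 1) i * qpow L (- 2 * of_int i) else 0)
       + (if i + 1 \<le> int m then T k (i + 1) * qint L (of_int (int m + i + 1)) else 0)
     else 0)"

definition actK :: "complex \<Rightarrow> complex \<Rightarrow> (nat \<Rightarrow> int \<Rightarrow> complex) \<Rightarrow> (nat \<Rightarrow> int \<Rightarrow> complex)" where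
  "actK L \<mu> T = (\<lambda>k i. qpow L (\<mu> - 2 * of_nat k + 2 * of_int i) * T k i)"

text \<open>A linear map Phi : M_mu \<rightarrow> M_mu (completed) L_{2m}, given by Phi j = image of f^j v_mu,
  is an intertwiner normalized by v_mu \<mapsto> v_mu \<otimes> w_0 + (lower weight in first factor).\<close>
definition is_trig_intertwiner ::
  "complex \<Rightarrow> complex \<Rightarrow> nat \<Rightarrow> (nat \<Rightarrow> nat \<Rightarrow> int \<Rightarrow> complex) \<Rightarrow> bool" where
  "is_trig_intertwiner L \<mu> m \<Phi> \<longleftrightarrow>
     (\<forall>j k i. (i < - int m \<or> int m < i) \<longrightarrow> \<Phi> j k i = 0) \<and>
     (\<forall>j. \<Phi> (Suc j) = actF L m (\<Phi> j)) \<and>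
     (\<forall>j. actE L \<mu> m (\<Phi> j) =
            (\<lambda>k i. qint L (\<mu> - of_nat j + 1) * qint L (of_nat j) * \<Phi> (j - 1) k i)) \<and>
     (\<forall>j. actK L \<mu> (\<Phi> j) = (\<lambda>k i. qpow L (\<mu> - 2 * of_nat j) * \<Phi> j k i)) \<and>
     \<Phi> 0 0 0 = 1 \<and> (\<forall>i. i \<noteq> 0 \<longrightarrow> \<Phi> 0 0 i = 0)"

definition trig_intertwiner :: "complex \<Rightarrow> complex \<Rightarrow> nat \<Rightarrow> (nat \<Rightarrow> nat \<Rightarrow> int \<Rightarrow> complex)" where
  "trig_intertwiner L \<mu> m = (THE \<Phi>. is_trig_intertwiner L \<mu> m \<Phi>)"

text \<open>j-th term of the trace: coefficient of f^j v_mu \<otimes> w_0 in Phi(f^j v_mu),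
  times the eigenvalue q^{lambda(mu-2j)} of q^{2 lambda rho}.\<close>
definition trace_term :: "complex \<Rightarrow> complex \<Rightarrow> nat \<Rightarrow> complex \<Rightarrow> nat \<Rightarrow> complex" where
  "trace_term L \<mu> m lam j = trig_intertwiner L \<mu> m j j 0 * qpow L (lam * (\<mu> - 2 * of_nat j))"

definition trace_formula :: "complex \<Rightarrow> complex \<Rightarrow> nat \<Rightarrow> complex \<Rightarrow> complex" where
  "trace_formula L \<mu> m lam = qpow L (lam * \<mu>) *
     (\<Sum>l\<le>m. (- 1) ^ l * qpow L (- 2 * lam * of_nat l)
        * qpow L (- (of_nat l * (of_nat l - 1) / 2))
        * (qfall L (of_nat m) l * qfall L (of_nat m + of_nat l) l / qfall L (of_nat l) l)
        * (qpow L 1 - qpow L (- 1)) ^ l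
        / ((\<Prod>i<l. (1 - qpow L (- 2 * \<mu> + 2 * of_nat i)))
           * (\<Prod>i\<le>l. (1 - qpow L (- 2 * lam - 2 * of_nat i)))))"

end

theory Submission
  imports Defs
begin


lemma qpow_add: "qpow L (x + y) = qpow L x * qpow L y"
  by (simp add: qpow_def distrib_right exp_add)
lemma qpow_diff: "qpow L (x - y) = qpow L x / qpow L y"
  by (simp add: qpow_def left_diff_distrib exp_diff)
lemma qpow_neg: "qpow L (- x) = inverse (qpow L x)"
  by (simp add: qpow_def exp_minus)
lemma qpow_nz[simp]: "qpow L x \<noteq> 0"
  by (simp add: qpow_def)
lemma qpow_0[simp]: "qpow L 0 = 1"
  by (simp add: qpow_def)
lemma qpow_nat_mult: "qpow L (of_nat n * x) = qpow L x ^ n"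
  by (simp only: qpow_def mult.assoc exp_of_nat_mult)
lemma qpow_2: "qpow L (2 * x) = qpow L x * qpow L x"
  using qpow_add[of L x x] by (simp only: mult_2)
lemma qpow_m2: "qpow L (-2 * x) = inverse (qpow L x * qpow L x)"
proof -
  have "-2*x = -(2*x)" by simp
  then show ?thesis by (simp only: qpow_neg qpow_2)
qed
lemmas qnorm = qpow_add qpow_diff qpow_neg qpow_2 qpow_m2 of_nat_Suc of_int_add of_int_diff of_int_of_nat_eq

lemma qint_0[simp]: "qint L 0 = 0" unfolding qint_def by simp

lemma root_unity_alg:
  assumes "(x::complex) ^ n = 1" "n > 0" shows "algebraic x"
proof (rule algebraic_root[of 1 "monom 1 n"])
  show "algebraic (1::complex)" by simp
qed (use assms in \<open>auto simp: poly_monom degree_monom_eq coeff_monom\<close>)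

lemma exp_int_ne1:
  fixes L :: complex
  assumes "\<not> algebraic (exp L)" "(n::int) \<noteq> 0"
  shows "exp (of_int n * L) \<noteq> 1"
proof
  assume h: "exp (of_int n * L) = 1"
  have "exp (of_nat (nat \<bar>n\<bar>) * L) = 1"
  proof (cases "n \<ge> 0")
    case True then show ?thesis using h by simp
  next
    case False
    then have e: "of_nat (nat \<bar>n\<bar>) * L = - (of_int n * L)" by simp
    have "exp (of_nat (nat \<bar>n\<bar>) * L) = exp (- (of_int n * L))"
      by (rule arg_cong[where f=exp, OF e])
    also have "\<dots> = inverse (exp (of_int n * L))" by (rule exp_minus)
    also have "\<dots> = 1" using h by simp
    finally show ?thesis .
  qed
  then have "exp L ^ nat \<bar>n\<bar> = 1" using exp_of_nat_mult[of "nat \<bar>n\<bar>" L] by simp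
  then have "algebraic (exp L)" by (rule root_unity_alg) (use assms in auto)
  with assms show False by simp
qed

lemma qint_eq0_iff:
  assumes "qpow L 1 - qpow L (-1) \<noteq> 0"
  shows "qint L x = 0 \<longleftrightarrow> qpow L (2*x) = 1"
proof -
  have "qint L x = 0 \<longleftrightarrow> qpow L x = inverse (qpow L x)"
    using assms unfolding qint_def qpow_neg[of L x] by (simp add: divide_eq_0_iff)
  also have "\<dots> \<longleftrightarrow> qpow L x * qpow L x = 1"
    by (metis qpow_nz inverse_unique right_inverse mult.commute)
  finally show ?thesis by (simp add: qpow_2)
qed



definition supp :: "nat \<Rightarrow> (nat \<Rightarrow> int \<Rightarrow> complex) \<Rightarrow> bool" where
  "supp m T \<longleftrightarrow> (\<forall>k i. (i < - int m \<or> int m < i) \<longrightarrow> T k i = 0)"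

lemma supp_actF: "supp m (actF L m T)" by (simp add: supp_def actF_def)
lemma supp_actE: "supp m (actE L \<mu> m T)" by (simp add: supp_def actE_def)

lemma actF_clean:
  assumes "supp m T"
  shows "actF L m T k i = (if k \<ge> 1 then T (k - 1) i * qpow L (- 2 * of_int i) else 0)
            + T k (i + 1) * qint L (of_nat m + of_int i + 1)"
proof -
  have z: "T k' i' = 0" if "i' < - int m \<or> int m < i'" for k' i'
    using assms that unfolding supp_def by blast
  show ?thesis
  proof (cases "i < - int m - 1")
    case True then show ?thesis using z by (simp add: actF_def)
  next
    case f1: False
    show ?thesis
    proof (cases "i = - int m - 1")
      case True
      then have "of_nat m + of_int i + 1 = (0::complex)" by simp
      then show ?thesis using z True by (simp add: actF_def)
    next
      case False
      then show ?thesis using z f1 by (auto simp add: actF_def)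
    qed
  qed
qed

lemma actE_clean:
  assumes "supp m T"
  shows "actE L \<mu> m T k i = T (Suc k) i * qint L (\<mu> - of_nat k) * qint L (of_nat (Suc k))
            + T k (i - 1) * qpow L (\<mu> - 2 * of_nat k) * qint L (of_nat m - of_int i + 1)"
proof -
  have z: "T k' i' = 0" if "i' < - int m \<or> int m < i'" for k' i'
    using assms that unfolding supp_def by blast
  show ?thesis
  proof (cases "i > int m + 1")
    case True then show ?thesis using z by (simp add: actE_def)
  next
    case f1: False
    show ?thesis
    proof (cases "i = int m + 1")
      case True
      then have "of_nat m - of_int i + 1 = (0::complex)" by simp
      then show ?thesis using z True by (simp add: actE_def)
    next
      case False
      then show ?thesis using z f1 by (auto simp add: actE_def)
    qed
  qed
qed

definition cinv :: "complex \<Rightarrow> complex" where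
  "cinv L = inverse (qpow L 1 - qpow L (-1))"

lemma qint_alt: "qint L x = (qpow L x - inverse (qpow L x)) * cinv L"
  by (simp add: qint_def cinv_def qpow_neg divide_inverse)

lemma cinv_eq: assumes "qpow L 1 - qpow L (-1) \<noteq> 0"
  shows "cinv L * (qpow L 1 * qpow L 1 - 1) = qpow L 1"
proof -
  have "qpow L 1 * qpow L 1 - 1 = qpow L 1 * (qpow L 1 - qpow L (-1))"
    by (simp add: qpow_neg algebra_simps)
  then show ?thesis using assms by (simp add: cinv_def)
qed

lemmas qn = qpow_add qpow_diff qpow_neg qpow_2 qpow_m2 of_nat_Suc of_int_add of_int_diff of_int_of_nat_eq of_int_1 qint_alt

lemma qpow_split: "x = y + z \<Longrightarrow> qpow L x = qpow L y * qpow L z"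
  by (simp add: qpow_add)

lemma cinv_alt: assumes "qpow L 1 - qpow L (-1) \<noteq> 0"
  shows "cinv L = qpow L 1 / (qpow L 1 * qpow L 1 - 1)" and "qpow L 1 * qpow L 1 - 1 \<noteq> 0"
proof -
  have e: "qpow L 1 * qpow L 1 - 1 = qpow L 1 * (qpow L 1 - qpow L (-1))"
    by (simp add: qpow_neg algebra_simps)
  then show "qpow L 1 * qpow L 1 - 1 \<noteq> 0" using assms by simp
  show "cinv L = qpow L 1 / (qpow L 1 * qpow L 1 - 1)"
    using assms unfolding e by (simp add: cinv_def field_simps)
qed

lemma frac_helper: "(c::complex) \<noteq> 0 \<Longrightarrow> x * y - z * w = c * v \<Longrightarrow> (x/c)*(y/c) - (z/c)*(w/c) = v/c"
  by (simp add: field_simps)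

lemma L1core:
  assumes c: "qpow L 1 - qpow L (-1) \<noteq> 0"
  shows "qint L a * qint L (b + 1) - qint L (a + 1) * qint L b = qint L (a - b)"
  unfolding qint_def
proof (rule frac_helper[OF c])
  show "(qpow L a - qpow L (- a)) * (qpow L (b + 1) - qpow L (- (b + 1))) -
    (qpow L (a + 1) - qpow L (- (a + 1))) * (qpow L b - qpow L (- b)) =
    (qpow L 1 - qpow L (- 1)) * (qpow L (a - b) - qpow L (- (a - b)))"
    by (simp only: qpow_add qpow_diff qpow_neg) (simp add: field_simps)
qed

lemma L2core:
  assumes c: "qpow L 1 - qpow L (-1) \<noteq> 0"
  shows "qpow L (- b) * qint L a + qpow L a * qint L b = qint L (a + b)"
    apply (simp only: qint_alt qpow_add qpow_diff qpow_neg)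
    apply (simp add: field_simps)
    done

lemma L1':
  assumes c: "qpow L 1 - qpow L (-1) \<noteq> 0" and "b' = b + 1" "a' = a + 1" "d = a - b"
  shows "qint L a * qint L b' - qint L a' * qint L b = qint L d"
  using L1core[OF c, of a b] assms by simp

lemma L2':
  assumes c: "qpow L 1 - qpow L (-1) \<noteq> 0" and "e = - b" "s = a + b"
  shows "qpow L e * qint L a + qpow L a * qint L b = qint L s"
  using L2core[OF c, of b a] assms by simp

lemma Xid:
  assumes c: "qpow L 1 - qpow L (-1) \<noteq> 0"
  shows "qpow L (-2 * of_int i) * (qint L (\<mu> - of_nat k) * qint L (of_nat (Suc k)) - qint L (\<mu> - of_nat k + 1) * qint L (of_nat k))
   + qpow L (\<mu> - 2 * of_nat k) * (qint L (of_nat m + of_int i) * qint L (of_nat m - of_int i + 1) - qint L (of_nat m + of_int i + 1) * qint L (of_nat m - of_int i))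
   = qint L (\<mu> - 2 * of_nat k + 2 * of_int i)"
proof -
  have 1: "qint L (\<mu> - of_nat k) * qint L (of_nat (Suc k)) - qint L (\<mu> - of_nat k + 1) * qint L (of_nat k) = qint L (\<mu> - 2 * of_nat k)"
    by (rule L1'[OF c]) simp_all
  have 2: "qint L (of_nat m + of_int i) * qint L (of_nat m - of_int i + 1) - qint L (of_nat m + of_int i + 1) * qint L (of_nat m - of_int i) = qint L (2 * of_int i)"
    by (rule L1'[OF c]) simp_all
  have 3: "qpow L (-2 * of_int i) * qint L (\<mu> - 2 * of_nat k) + qpow L (\<mu> - 2 * of_nat k) * qint L (2 * of_int i) = qint L (\<mu> - 2 * of_nat k + 2 * of_int i)"
    by (rule L2'[OF c]) simp_all
  show ?thesis unfolding 1 2 3 ..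
qed

lemma comm:
  assumes "supp m T" and c: "qpow L 1 - qpow L (-1) \<noteq> 0"
  shows "actE L \<mu> m (actF L m T) k i = actF L m (actE L \<mu> m T) k i + qint L (\<mu> - 2 * of_nat k + 2 * of_int i) * T k i"
proof -
  note cl = actE_clean[OF supp_actF] actF_clean[OF assms(1)] actF_clean[OF supp_actE] actE_clean[OF assms(1)]
  have e1: "qint L (of_nat m + of_int (i - 1) + 1) = qint L (of_nat m + of_int i)"
    by (rule arg_cong[where f="qint L"]) simp
  have e2: "qint L (of_nat m - of_int (i + 1) + 1) = qint L (of_nat m - of_int i)"
    by (rule arg_cong[where f="qint L"]) simp
  have e3: "T k' (i + 1 - 1) = T k' i" "T k' (i - 1 + 1) = T k' i" for k' by simp_all
  show ?thesis
  proof (cases k)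
    case 0
    have n: "((1::nat) \<le> 0) = False" "((1::nat) \<le> Suc 0) = True" by simp_all
    show ?thesis unfolding 0 cl
      apply (simp only: n if_False if_True e1 e2 e3 Xid[OF c, of i \<mu> 0 m, symmetric] diff_Suc_1)
      apply (simp add: algebra_simps)
      done
  next
    case (Suc k')
    have n: "((1::nat) \<le> Suc k') = True" "((1::nat) \<le> Suc (Suc k')) = True" by simp_all
    have e4: "qint L (\<mu> - of_nat k') = qint L (\<mu> - of_nat (Suc k') + 1)"
      by (rule arg_cong[where f="qint L"]) simp
    have y1: "qpow L (-2 * of_int (i - 1)) = qpow L (-2 * of_int i) * qpow L 2"
      by (rule qpow_split) (simp add: algebra_simps)
    have y2: "qpow L (\<mu> - 2 * of_nat k') = qpow L (\<mu> - 2 * of_nat (Suc k')) * qpow L 2"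
      by (rule qpow_split) (simp add: algebra_simps)
    show ?thesis unfolding Suc cl
      apply (simp only: n if_False if_True diff_Suc_1)
      apply (simp only: e1 e2 e3 e4 y1 y2 Xid[OF c, of i \<mu> "Suc k'" m, symmetric])
      apply (simp add: algebra_simps)
      done
  qed
qed



lemma actF_scale: "actF L m (\<lambda>k i. c * T k i) = (\<lambda>k i. c * actF L m T k i)"
  by (rule ext)+ (simp add: actF_def algebra_simps)

locale gen =
  fixes L :: complex and m :: nat and \<mu> :: complex
  assumes trans: "\<not> algebraic (exp L)"
    and generic: "\<forall>k<m. exp (2 * (\<mu> - of_nat k) * L) \<noteq> 1"
begin

lemma qpow_int_ne1: "n \<noteq> 0 \<Longrightarrow> qpow L (of_int n) \<noteq> 1"
  unfolding qpow_def using exp_int_ne1[OF trans] by blast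

lemma c_nz: "qpow L 1 - qpow L (-1) \<noteq> 0"
proof
  assume "qpow L 1 - qpow L (-1) = 0"
  then have "qpow L 1 = qpow L (-1)" by simp
  moreover have "qpow L 1 * qpow L (-1) = 1" by (simp add: qpow_neg)
  ultimately have "qpow L 1 * qpow L 1 = 1" by simp
  then have "qpow L (of_int 2) = 1" using qpow_2[of L 1] by simp
  with qpow_int_ne1[of 2] show False by simp
qed

lemma qint_nat_nz: "n > 0 \<Longrightarrow> qint L (of_nat n) \<noteq> 0"
proof
  assume n: "n > 0" and "qint L (of_nat n) = 0"
  then have h: "qpow L (2 * of_nat n) = 1" using qint_eq0_iff[OF c_nz] by blast
  have ne: "2 * int n \<noteq> 0" using n by simp
  have "qpow L (of_int (2 * int n)) = qpow L (2 * of_nat n)"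
    by (rule arg_cong[where f="qpow L"]) simp
  with h qpow_int_ne1[OF ne] show False by argo
qed

lemma qint_1: "qint L 1 = 1"
  using c_nz unfolding qint_def by simp

lemma gen_qpow: "k < m \<Longrightarrow> qpow L (2 * (\<mu> - of_nat k)) \<noteq> 1"
  using generic unfolding qpow_def by blast

lemma qint_mu_nz: "k < m \<Longrightarrow> qint L (\<mu> - of_nat k) \<noteq> 0"
  using gen_qpow qint_eq0_iff[OF c_nz, of "\<mu> - of_nat k"] by blast

lemma den_nz: "k < m \<Longrightarrow> 1 - qpow L (-2 * \<mu> + 2 * of_nat k) \<noteq> 0"
proof
  assume k: "k < m" and h: "1 - qpow L (-2 * \<mu> + 2 * of_nat k) = 0"
  have "-2 * \<mu> + 2 * of_nat k = - (2 * (\<mu> - of_nat k))" by (simp add: algebra_simps)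
  then have e: "qpow L (-2 * \<mu> + 2 * of_nat k) = inverse (qpow L (2 * (\<mu> - of_nat k)))"
    by (subst \<open>-2 * \<mu> + 2 * of_nat k = - (2 * (\<mu> - of_nat k))\<close>) (rule qpow_neg)
  from h have "qpow L (-2 * \<mu> + 2 * of_nat k) = 1" by simp
  with e have "qpow L (2 * (\<mu> - of_nat k)) = 1" by simp
  with gen_qpow k show False by blast
qed

end



definition acoef :: "complex \<Rightarrow> nat \<Rightarrow> complex \<Rightarrow> nat \<Rightarrow> complex" where
  "acoef L m \<mu> l = (- 1) ^ l * qpow L (- (of_nat l * (of_nat l - 1) / 2))
        * qfall L (of_nat m) l * (qpow L 1 - qpow L (- 1)) ^ l
     / (qfall L (of_nat l) l * (\<Prod>i<l. (1 - qpow L (- 2 * \<mu> + 2 * of_nat i))))"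

lemma qfall_Suc: "qfall L n (Suc l) = qfall L n l * qint L (n - of_nat l)"
  by (simp add: qfall_def)

lemma qfall_self_Suc: "qfall L (of_nat (Suc l)) (Suc l) = qint L (of_nat (Suc l)) * qfall L (of_nat l) l"
proof -
  have "qfall L (of_nat (Suc l)) (Suc l) = qint L (of_nat (Suc l) - of_nat 0) * (\<Prod>i<l. qint L (of_nat (Suc l) - of_nat (Suc i)))"
    unfolding qfall_def by (rule prod.lessThan_Suc_shift)
  also have "(\<Prod>i<l. qint L (of_nat (Suc l) - of_nat (Suc i))) = qfall L (of_nat l) l"
    unfolding qfall_def by (rule prod.cong) simp_all
  finally show ?thesis by simp
qed

lemma acoef_0: "acoef L m \<mu> 0 = 1"
  by (simp add: acoef_def qfall_def)

lemma acoef_Suc: "acoef L m \<mu> (Suc k) = acoef L m \<mu> k *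
   (- qpow L (- of_nat k) * qint L (of_nat m - of_nat k) * (qpow L 1 - qpow L (- 1))
     / (qint L (of_nat (Suc k)) * (1 - qpow L (- 2 * \<mu> + 2 * of_nat k))))"
proof -
  have p: "qpow L (- (of_nat (Suc k) * (of_nat (Suc k) - 1) / 2)) = qpow L (- (of_nat k * (of_nat k - 1) / 2)) * qpow L (- of_nat k)"
    by (rule qpow_split) (simp add: field_simps)
  show ?thesis
    unfolding acoef_def p qfall_self_Suc
    unfolding qfall_Suc prod.lessThan_Suc power_Suc
    by (simp only: divide_inverse inverse_mult_distrib mult_ac mult_minus_left mult_minus_right mult_1_left)
qed

definition Phi0 :: "complex \<Rightarrow> nat \<Rightarrow> complex \<Rightarrow> nat \<Rightarrow> int \<Rightarrow> complex" where
  "Phi0 L m \<mu> k i = (if i = int k \<and> k \<le> m then acoef L m \<mu> k else 0)"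

definition Phi :: "complex \<Rightarrow> nat \<Rightarrow> complex \<Rightarrow> nat \<Rightarrow> nat \<Rightarrow> int \<Rightarrow> complex" where
  "Phi L m \<mu> j = (actF L m ^^ j) (Phi0 L m \<mu>)"

lemma Phi_0: "Phi L m \<mu> 0 = Phi0 L m \<mu>" by (simp add: Phi_def)
lemma Phi_Suc: "Phi L m \<mu> (Suc j) = actF L m (Phi L m \<mu> j)" by (simp add: Phi_def)

lemma supp_Phi0: "supp m (Phi0 L m \<mu>)" by (auto simp: supp_def Phi0_def)
lemma supp_Phi: "supp m (Phi L m \<mu> j)"
  by (cases j) (simp_all add: Phi_0 Phi_Suc supp_Phi0 supp_actF)

lemma weight: "Phi L m \<mu> j k i \<noteq> 0 \<Longrightarrow> int k = int j + i"
proof (induction j arbitrary: k i)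
  case 0 then show ?case by (simp add: Phi_0 Phi0_def split: if_splits)
next
  case (Suc j)
  have "(if k \<ge> 1 then Phi L m \<mu> j (k - 1) i * qpow L (- 2 * of_int i) else 0)
            + Phi L m \<mu> j k (i + 1) * qint L (of_nat m + of_int i + 1) \<noteq> 0" (is "?h")
    using Suc.prems unfolding Phi_Suc actF_clean[OF supp_Phi] .
  note h = this
  show ?case
  proof (cases "Phi L m \<mu> j k (i + 1) = 0")
    case True
    with h have "k \<ge> 1 \<and> Phi L m \<mu> j (k - 1) i \<noteq> 0" by (auto split: if_splits)
    then show ?thesis using Suc.IH[of "k - 1" i] by auto
  next
    case False then show ?thesis using Suc.IH[of k "i + 1"] by simp
  qed
qed

context gen
begin

lemma qfall_self_nz: "qfall L (of_nat l) l \<noteq> 0"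
proof (induction l)
  case 0 then show ?case by (simp add: qfall_def)
next
  case (Suc l) then show ?case using qint_nat_nz[of "Suc l"] by (simp only: qfall_self_Suc) simp
qed

lemma prod_den_nz: "l \<le> m \<Longrightarrow> (\<Prod>i<l. (1 - qpow L (- 2 * \<mu> + 2 * of_nat i))) \<noteq> 0"
  using den_nz by (simp add: prod_zero_iff)

lemma acoef_rec:
  assumes k: "k < m"
  shows "acoef L m \<mu> (Suc k) * qint L (\<mu> - of_nat k) * qint L (of_nat (Suc k))
     + acoef L m \<mu> k * qpow L (\<mu> - 2 * of_nat k) * qint L (of_nat m - of_nat k) = 0"
proof -
  define D where "D = 1 - qpow L (- 2 * \<mu> + 2 * of_nat k)"
  define U where "U = qint L (\<mu> - of_nat k)"
  define s where "s = qint L (of_nat (Suc k))"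
  define cc where "cc = qpow L 1 - qpow L (- 1)"
  have D: "D \<noteq> 0" unfolding D_def using den_nz k by blast
  have s: "s \<noteq> 0" unfolding s_def using qint_nat_nz by blast
  have cc: "cc \<noteq> 0" unfolding cc_def using c_nz .
  have k1: "cc * U = qpow L (\<mu> - of_nat k) - qpow L (- (\<mu> - of_nat k))"
    unfolding U_def qint_def cc_def using c_nz by simp
  have k2: "qpow L (- of_nat k) * (cc * U) = qpow L (\<mu> - 2 * of_nat k) * D"
    unfolding k1 D_def
    by (simp only: qpow_add qpow_diff qpow_neg qpow_2 qpow_m2) (simp add: field_simps)
  show ?thesis
    unfolding acoef_Suc
    unfolding D_def[symmetric] U_def[symmetric] s_def[symmetric] cc_def[symmetric]
    using D s k2 by (simp add: field_simps)
qed

lemma actE_Phi0: "actE L \<mu> m (Phi0 L m \<mu>) k i = 0"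
proof -
  have cl: "actE L \<mu> m (Phi0 L m \<mu>) k i = Phi0 L m \<mu> (Suc k) i * qint L (\<mu> - of_nat k) * qint L (of_nat (Suc k))
            + Phi0 L m \<mu> k (i - 1) * qpow L (\<mu> - 2 * of_nat k) * qint L (of_nat m - of_int i + 1)"
    by (rule actE_clean[OF supp_Phi0])
  show ?thesis
  proof (cases "i = int (Suc k)")
    case True
    have e: "qint L (of_nat m - of_int i + 1) = qint L (of_nat m - of_nat k)"
      by (rule arg_cong[where f="qint L"]) (simp add: True)
    show ?thesis
    proof (cases "Suc k \<le> m")
      case True
      then show ?thesis unfolding cl e using acoef_rec[of k] \<open>i = int (Suc k)\<close>
        by (simp add: Phi0_def)
    next
      case False
      have "Phi0 L m \<mu> k (i - 1) * qint L (of_nat m - of_nat k) = 0"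
      proof (cases "k = m")
        case True then show ?thesis by simp
      next
        case False then show ?thesis using \<open>\<not> Suc k \<le> m\<close> by (simp add: Phi0_def)
      qed
      then show ?thesis unfolding cl e using False \<open>i = int (Suc k)\<close>
        by (simp add: Phi0_def)
    qed
  next
    case False
    then show ?thesis unfolding cl by (simp add: Phi0_def)
  qed
qed

lemma E_Phi: "actE L \<mu> m (Phi L m \<mu> j) = (\<lambda>k i. qint L (\<mu> - of_nat j + 1) * qint L (of_nat j) * Phi L m \<mu> (j - 1) k i)"
proof (induction j)
  case 0 then show ?case by (simp add: Phi_0 actE_Phi0)
next
  case (Suc j)
  define cj where "cj = qint L (\<mu> - of_nat j + 1) * qint L (of_nat j)"
  have a: "cj * actF L m (Phi L m \<mu> (j - 1)) k i = cj * Phi L m \<mu> j k i" for k i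
  proof (cases j)
    case 0 then show ?thesis by (simp add: cj_def)
  next
    case (Suc j') then show ?thesis by (simp add: Phi_Suc)
  qed
  have b: "qint L (\<mu> - 2 * of_nat k + 2 * of_int i) * Phi L m \<mu> j k i = qint L (\<mu> - 2 * of_nat j) * Phi L m \<mu> j k i" for k i
  proof (cases "Phi L m \<mu> j k i = 0")
    case False
    then have "int k = int j + i" by (rule weight)
    then have "(of_nat k :: complex) = of_nat j + of_int i"
      by (metis of_int_add of_int_of_nat_eq)
    then show ?thesis by simp
  qed simp
  have c: "qint L (\<mu> - of_nat j) * qint L (of_nat (Suc j)) - qint L (\<mu> - of_nat j + 1) * qint L (of_nat j) = qint L (\<mu> - 2 * of_nat j)"
    by (rule L1'[OF c_nz]) simp_all
  have d: "qint L (\<mu> - of_nat (Suc j) + 1) = qint L (\<mu> - of_nat j)"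
    by (rule arg_cong[where f="qint L"]) simp
  show ?case
  proof (rule ext, rule ext)
    fix k i
    have "actE L \<mu> m (Phi L m \<mu> (Suc j)) k i = actF L m (actE L \<mu> m (Phi L m \<mu> j)) k i
            + qint L (\<mu> - 2 * of_nat k + 2 * of_int i) * Phi L m \<mu> j k i"
      unfolding Phi_Suc by (rule comm[OF supp_Phi c_nz])
    also have "\<dots> = cj * Phi L m \<mu> j k i + qint L (\<mu> - 2 * of_nat j) * Phi L m \<mu> j k i"
      unfolding Suc.IH cj_def[symmetric] actF_scale a b ..
    also have "\<dots> = qint L (\<mu> - of_nat (Suc j) + 1) * qint L (of_nat (Suc j)) * Phi L m \<mu> (Suc j - 1) k i"
      unfolding d using c by (simp add: cj_def algebra_simps)
    finally show "actE L \<mu> m (Phi L m \<mu> (Suc j)) k i = qint L (\<mu> - of_nat (Suc j) + 1) * qint L (of_nat (Suc j)) * Phi L m \<mu> (Suc j - 1) k i" .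
  qed
qed

lemma K_Phi: "actK L \<mu> (Phi L m \<mu> j) = (\<lambda>k i. qpow L (\<mu> - 2 * of_nat j) * Phi L m \<mu> j k i)"
proof (rule ext, rule ext)
  fix k i
  show "actK L \<mu> (Phi L m \<mu> j) k i = qpow L (\<mu> - 2 * of_nat j) * Phi L m \<mu> j k i"
  proof (cases "Phi L m \<mu> j k i = 0")
    case False
    then have "int k = int j + i" by (rule weight)
    then have "(of_nat k :: complex) = of_nat j + of_int i"
      by (metis of_int_add of_int_of_nat_eq)
    then show ?thesis by (simp add: actK_def)
  qed (simp add: actK_def)
qed

lemma Phi_is: "is_trig_intertwiner L \<mu> m (Phi L m \<mu>)"
  unfolding is_trig_intertwiner_def
proof (intro conjI allI impI)
  fix j k i assume "i < - int m \<or> int m < i"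
  then show "Phi L m \<mu> j k i = 0" using supp_Phi unfolding supp_def by blast
next
  fix j show "Phi L m \<mu> (Suc j) = actF L m (Phi L m \<mu> j)" by (rule Phi_Suc)
next
  fix j show "actE L \<mu> m (Phi L m \<mu> j) = (\<lambda>k i. qint L (\<mu> - of_nat j + 1) * qint L (of_nat j) * Phi L m \<mu> (j - 1) k i)"
    by (rule E_Phi)
next
  fix j show "actK L \<mu> (Phi L m \<mu> j) = (\<lambda>k i. qpow L (\<mu> - 2 * of_nat j) * Phi L m \<mu> j k i)"
    by (rule K_Phi)
next
  show "Phi L m \<mu> 0 0 0 = 1" by (simp add: Phi_0 Phi0_def acoef_0)
next
  fix i :: int assume "i \<noteq> 0" then show "Phi L m \<mu> 0 0 i = 0" by (simp add: Phi_0 Phi0_def)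
qed

lemma unique:
  assumes "is_trig_intertwiner L \<mu> m \<Psi>"
  shows "\<Psi> = Phi L m \<mu>"
proof -
  note h = assms[unfolded is_trig_intertwiner_def]
  note hA = h[THEN conjunct1]
  note hB = h[THEN conjunct2, THEN conjunct1]
  note hC = h[THEN conjunct2, THEN conjunct2, THEN conjunct1]
  note hD = h[THEN conjunct2, THEN conjunct2, THEN conjunct2, THEN conjunct1]
  note hE = h[THEN conjunct2, THEN conjunct2, THEN conjunct2, THEN conjunct2, THEN conjunct1]
  have sP: "supp m (\<Psi> j)" for j using hA unfolding supp_def by blast
  have FP: "\<Psi> (Suc j) = actF L m (\<Psi> j)" for j using hB by (rule spec)
  have EP: "actE L \<mu> m (\<Psi> 0) k i = 0" for k i
    using fun_cong[OF fun_cong[OF spec[OF hC, of 0]], of k i] by simp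
  have KP: "actK L \<mu> (\<Psi> j) k i = qpow L (\<mu> - 2 * of_nat j) * \<Psi> j k i" for j k i
    using fun_cong[OF fun_cong[OF spec[OF hD, of j]], of k i] by simp
  have b0: "\<Psi> 0 0 0 = 1" by (rule hE)
  have wP: "int k = int j + i" if nz: "\<Psi> j k i \<noteq> 0" for j k i
  proof (rule ccontr)
    assume ne: "int k \<noteq> int j + i"
    then have ne2: "2 * (i + int j - int k) \<noteq> 0" by simp
    have "qpow L (\<mu> - 2 * of_nat k + 2 * of_int i) = qpow L (\<mu> - 2 * of_nat j) * qpow L (of_int (2 * (i + int j - int k)))"
      by (rule qpow_split) (simp add: algebra_simps)
    moreover have "qpow L (\<mu> - 2 * of_nat k + 2 * of_int i) * \<Psi> j k i = qpow L (\<mu> - 2 * of_nat j) * \<Psi> j k i"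
      using KP[of j k i] by (simp add: actK_def)
    ultimately have "qpow L (of_int (2 * (i + int j - int k))) = 1"
      using nz by simp
    with qpow_int_ne1[OF ne2] show False by simp
  qed
  have diag: "\<Psi> 0 k (int k) = Phi0 L m \<mu> k (int k)" for k
  proof (induction k)
    case 0 then show ?case using b0 by (simp add: Phi0_def acoef_0)
  next
    case (Suc k)
    show ?case
    proof (cases "Suc k \<le> m")
      case True
      then have km: "k < m" by simp
      have cl: "actE L \<mu> m (\<Psi> 0) k (int (Suc k)) = \<Psi> 0 (Suc k) (int (Suc k)) * qint L (\<mu> - of_nat k) * qint L (of_nat (Suc k))
            + \<Psi> 0 k (int (Suc k) - 1) * qpow L (\<mu> - 2 * of_nat k) * qint L (of_nat m - of_int (int (Suc k)) + 1)"
        by (rule actE_clean[OF sP])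
      have e: "qint L (of_nat m - of_int (int (Suc k)) + 1) = qint L (of_nat m - of_nat k)"
        by (rule arg_cong[where f="qint L"]) simp
      have i1: "int (Suc k) - 1 = int k" by simp
      have X: "\<Psi> 0 (Suc k) (int (Suc k)) * qint L (\<mu> - of_nat k) * qint L (of_nat (Suc k))
            + acoef L m \<mu> k * qpow L (\<mu> - 2 * of_nat k) * qint L (of_nat m - of_nat k) = 0"
        using EP[of k "int (Suc k)"] Suc.IH km unfolding cl e i1 by (simp add: Phi0_def)
      have "\<Psi> 0 (Suc k) (int (Suc k)) * qint L (\<mu> - of_nat k) * qint L (of_nat (Suc k))
            + acoef L m \<mu> k * qpow L (\<mu> - 2 * of_nat k) * qint L (of_nat m - of_nat k)
          = acoef L m \<mu> (Suc k) * qint L (\<mu> - of_nat k) * qint L (of_nat (Suc k))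
            + acoef L m \<mu> k * qpow L (\<mu> - 2 * of_nat k) * qint L (of_nat m - of_nat k)"
        unfolding X acoef_rec[OF km] ..
      then have "\<Psi> 0 (Suc k) (int (Suc k)) * (qint L (\<mu> - of_nat k) * qint L (of_nat (Suc k)))
            = acoef L m \<mu> (Suc k) * (qint L (\<mu> - of_nat k) * qint L (of_nat (Suc k)))"
        by (simp only: add_right_cancel mult.assoc)
      moreover have "qint L (\<mu> - of_nat k) * qint L (of_nat (Suc k)) \<noteq> 0"
        using qint_mu_nz[OF km] qint_nat_nz[of "Suc k"] by simp
      ultimately show ?thesis using True by (simp add: Phi0_def)
    next
      case False
      then have "\<Psi> 0 (Suc k) (int (Suc k)) = 0" using sP[of 0] unfolding supp_def by simp
      then show ?thesis using False by (simp add: Phi0_def)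
    qed
  qed
  have P0: "\<Psi> 0 = Phi0 L m \<mu>"
  proof (rule ext, rule ext)
    fix k i
    show "\<Psi> 0 k i = Phi0 L m \<mu> k i"
    proof (cases "i = int k")
      case True then show ?thesis using diag by simp
    next
      case False
      then have "\<Psi> 0 k i = 0" using wP[of 0 k i] by auto
      then show ?thesis using False by (simp add: Phi0_def)
    qed
  qed
  have "\<Psi> j = Phi L m \<mu> j" for j
    by (induction j) (simp_all add: P0 Phi_0 Phi_Suc FP)
  then show ?thesis by (rule ext)
qed

lemma trig_eq: "trig_intertwiner L \<mu> m = Phi L m \<mu>"
  unfolding trig_intertwiner_def
  by (rule the_equality) (rule Phi_is, erule unique)

end



definition cseq :: "complex \<Rightarrow> nat \<Rightarrow> complex \<Rightarrow> nat \<Rightarrow> nat \<Rightarrow> complex" where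
  "cseq L m \<mu> j i = Phi L m \<mu> j (j + i) (int i)"

definition Rb :: "complex \<Rightarrow> nat \<Rightarrow> real" where
  "Rb L m = 1 + (\<Sum>i\<le>m. (cmod (qpow L (-2 * of_nat i)) + cmod (qint L (of_nat m + of_nat i + 1))))"

definition Mb :: "complex \<Rightarrow> nat \<Rightarrow> complex \<Rightarrow> real" where
  "Mb L m \<mu> = (\<Sum>i\<le>m. cmod (acoef L m \<mu> i))"

lemma cseq_rec: "cseq L m \<mu> (Suc j) i = cseq L m \<mu> j i * qpow L (-2 * of_nat i)
     + cseq L m \<mu> j (Suc i) * qint L (of_nat m + of_nat i + 1)"
proof -
  have "cseq L m \<mu> (Suc j) i = actF L m (Phi L m \<mu> j) (Suc j + i) (int i)"
    unfolding cseq_def Phi_Suc ..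
  also have "\<dots> = Phi L m \<mu> j (j + i) (int i) * qpow L (- 2 * of_int (int i))
            + Phi L m \<mu> j (Suc j + i) (int i + 1) * qint L (of_nat m + of_int (int i) + 1)"
    unfolding actF_clean[OF supp_Phi] by simp
  also have "Phi L m \<mu> j (Suc j + i) (int i + 1) = cseq L m \<mu> j (Suc i)"
    unfolding cseq_def by (simp add: add.commute)
  finally show ?thesis by (simp add: cseq_def)
qed

lemma cseq_big: "i > m \<Longrightarrow> cseq L m \<mu> j i = 0"
  using supp_Phi[of m L \<mu> j] unfolding supp_def cseq_def by simp

lemma cseq_0: "cseq L m \<mu> 0 i = (if i \<le> m then acoef L m \<mu> i else 0)"
  by (simp add: cseq_def Phi_0 Phi0_def)

lemma Rb_ge: "i \<le> m \<Longrightarrow> cmod (qpow L (-2 * of_nat i)) + cmod (qint L (of_nat m + of_nat i + 1)) \<le> Rb L m"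
proof -
  assume i: "i \<le> m"
  have "cmod (qpow L (-2 * of_nat i)) + cmod (qint L (of_nat m + of_nat i + 1))
     \<le> (\<Sum>i\<le>m. (cmod (qpow L (-2 * of_nat i)) + cmod (qint L (of_nat m + of_nat i + 1))))"
    by (rule member_le_sum) (use i in auto)
  then show ?thesis unfolding Rb_def by simp
qed

lemma Rb_pos: "Rb L m \<ge> 1"
  unfolding Rb_def by (simp add: sum_nonneg)

lemma cseq_bound: "cmod (cseq L m \<mu> j i) \<le> Mb L m \<mu> * Rb L m ^ j"
proof (induction j arbitrary: i)
  case 0
  show ?case
  proof (cases "i \<le> m")
    case True
    have "cmod (acoef L m \<mu> i) \<le> Mb L m \<mu>"
      unfolding Mb_def by (rule member_le_sum) (use True in auto)
    then show ?thesis using True by (simp add: cseq_0)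
  next
    case False then show ?thesis by (simp add: cseq_0 Mb_def sum_nonneg)
  qed
next
  case (Suc j)
  show ?case
  proof (cases "i \<le> m")
    case True
    let ?B = "Mb L m \<mu> * Rb L m ^ j"
    have B: "?B \<ge> 0" using Suc.IH[of 0] by (meson norm_ge_zero order_trans)
    have "cmod (cseq L m \<mu> (Suc j) i) \<le> cmod (cseq L m \<mu> j i) * cmod (qpow L (-2 * of_nat i))
           + cmod (cseq L m \<mu> j (Suc i)) * cmod (qint L (of_nat m + of_nat i + 1))"
      unfolding cseq_rec by (metis norm_triangle_ineq norm_mult)
    also have "\<dots> \<le> ?B * cmod (qpow L (-2 * of_nat i)) + ?B * cmod (qint L (of_nat m + of_nat i + 1))"
      by (intro add_mono mult_right_mono Suc.IH) simp_all
    also have "\<dots> = ?B * (cmod (qpow L (-2 * of_nat i)) + cmod (qint L (of_nat m + of_nat i + 1)))"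
      by (simp add: algebra_simps)
    also have "\<dots> \<le> ?B * Rb L m"
      by (rule mult_left_mono[OF Rb_ge[OF True] B])
    finally show ?thesis by (simp add: algebra_simps)
  next
    case False
    then have "cseq L m \<mu> (Suc j) i = 0" by (simp add: cseq_big)
    moreover have "Mb L m \<mu> * Rb L m ^ Suc j \<ge> 0"
      using Rb_pos[of L m] by (simp add: Mb_def sum_nonneg)
    ultimately show ?thesis by simp
  qed
qed

lemma cseq_summable:
  assumes x: "cmod x < 1 / Rb L m"
  shows "summable (\<lambda>j. cseq L m \<mu> j i * x ^ j)"
proof (rule summable_comparison_test)
  have R: "Rb L m > 0" using Rb_pos[of L m] by simp
  have r: "Rb L m * cmod x < 1" using x R by (simp add: field_simps)
  show "\<exists>N. \<forall>n\<ge>N. norm (cseq L m \<mu> n i * x ^ n) \<le> Mb L m \<mu> * (Rb L m * cmod x) ^ n"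
  proof (intro exI allI impI)
    fix n :: nat
    have "norm (cseq L m \<mu> n i * x ^ n) = cmod (cseq L m \<mu> n i) * cmod x ^ n"
      by (simp add: norm_mult norm_power)
    also have "\<dots> \<le> Mb L m \<mu> * Rb L m ^ n * cmod x ^ n"
      by (rule mult_right_mono[OF cseq_bound]) simp
    also have "\<dots> = Mb L m \<mu> * (Rb L m * cmod x) ^ n"
      by (simp add: power_mult_distrib)
    finally show "norm (cseq L m \<mu> n i * x ^ n) \<le> Mb L m \<mu> * (Rb L m * cmod x) ^ n" .
  qed
  show "summable (\<lambda>n. Mb L m \<mu> * (Rb L m * cmod x) ^ n)"
    by (rule summable_mult, rule summable_geometric) (use r R in \<open>simp add: abs_mult\<close>)
qed

definition Gf :: "complex \<Rightarrow> nat \<Rightarrow> complex \<Rightarrow> complex \<Rightarrow> nat \<Rightarrow> complex" where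
  "Gf L m \<mu> x i = (\<Sum>l\<in>{i..m}. acoef L m \<mu> l * (\<Prod>t\<in>{i<..l}. qint L (of_nat m + of_nat t)) * x ^ (l - i)
      / (\<Prod>t\<in>{i..l}. (1 - x * qpow L (-2 * of_nat t))))"

lemma Gf_big: "i > m \<Longrightarrow> Gf L m \<mu> x i = 0"
  by (simp add: Gf_def)

lemma Gf_rec:
  assumes i: "i \<le> m" and D: "1 - x * qpow L (-2 * of_nat i) \<noteq> 0"
  shows "Gf L m \<mu> x i * (1 - x * qpow L (-2 * of_nat i)) = acoef L m \<mu> i + x * qint L (of_nat m + of_nat i + 1) * Gf L m \<mu> x (Suc i)"
proof -
  define Di where "Di = 1 - x * qpow L (-2 * of_nat i)"
  define Q where "Q = qint L (of_nat m + of_nat i + 1)"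
  define tm where "tm l = acoef L m \<mu> l * (\<Prod>t\<in>{Suc i<..l}. qint L (of_nat m + of_nat t)) * x ^ (l - Suc i)
      / (\<Prod>t\<in>{Suc i..l}. (1 - x * qpow L (-2 * of_nat t)))" for l
  have set: "{i..m} = insert i {Suc i..m}" using i by auto
  have t0: "acoef L m \<mu> i * (\<Prod>t\<in>{i<..i}. qint L (of_nat m + of_nat t)) * x ^ (i - i)
      / (\<Prod>t\<in>{i..i}. (1 - x * qpow L (-2 * of_nat t))) = acoef L m \<mu> i / Di"
    by (simp add: Di_def)
  have tl: "acoef L m \<mu> l * (\<Prod>t\<in>{i<..l}. qint L (of_nat m + of_nat t)) * x ^ (l - i)
      / (\<Prod>t\<in>{i..l}. (1 - x * qpow L (-2 * of_nat t))) = x * Q * tm l / Di" if l: "l \<in> {Suc i..m}" for l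
  proof -
    have s1: "{i<..l} = insert (Suc i) {Suc i<..l}" using l by auto
    have s2: "{i..l} = insert i {Suc i..l}" using l by auto
    have p1: "(\<Prod>t\<in>{i<..l}. qint L (of_nat m + of_nat t)) = Q * (\<Prod>t\<in>{Suc i<..l}. qint L (of_nat m + of_nat t))"
      unfolding s1 Q_def by (subst prod.insert) (simp_all add: ac_simps)
    have p2: "(\<Prod>t\<in>{i..l}. (1 - x * qpow L (-2 * of_nat t))) = Di * (\<Prod>t\<in>{Suc i..l}. (1 - x * qpow L (-2 * of_nat t)))"
      unfolding s2 Di_def by (subst prod.insert) simp_all
    have p3: "x ^ (l - i) = x * x ^ (l - Suc i)"
      using l by (metis Suc_diff_Suc atLeastAtMost_iff less_eq_Suc_le power_Suc)
    show ?thesis unfolding p1 p2 p3 tm_def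
      by (simp only: divide_inverse inverse_mult_distrib mult_ac)
  qed
  have "Gf L m \<mu> x i = acoef L m \<mu> i / Di + (\<Sum>l\<in>{Suc i..m}. x * Q * tm l / Di)"
  proof -
    have ni: "i \<notin> {Suc i..m}" by simp
    show ?thesis
      unfolding Gf_def set sum.insert[OF finite_atLeastAtMost ni] t0
      by (rule arg_cong2[where f="(+)"], rule refl, rule sum.cong, rule refl, erule tl)
  qed
  also have "(\<Sum>l\<in>{Suc i..m}. x * Q * tm l / Di) = x * Q * Gf L m \<mu> x (Suc i) / Di"
    unfolding Gf_def tm_def by (simp add: sum_divide_distrib sum_distrib_left)
  finally have "Gf L m \<mu> x i = acoef L m \<mu> i / Di + x * Q * Gf L m \<mu> x (Suc i) / Di" .
  then show ?thesis using D unfolding Di_def[symmetric] Q_def[symmetric] by (simp add: field_simps)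
qed

lemma cseq_sums:
  assumes x: "cmod x < 1 / Rb L m" and i: "i \<le> Suc m"
  shows "(\<lambda>j. cseq L m \<mu> j i * x ^ j) sums Gf L m \<mu> x i"
  using i
proof (induction i rule: inc_induct)
  case base
  then show ?case by (simp add: cseq_big Gf_big)
next
  case (step n)
  then have n: "n \<le> m" by simp
  have R: "Rb L m > 0" using Rb_pos[of L m] by simp
  define q where "q = qpow L (-2 * of_nat n)"
  define Q where "Q = qint L (of_nat m + of_nat n + 1)"
  define f where "f j = cseq L m \<mu> j n * x ^ j" for j
  have qR: "cmod q \<le> Rb L m"
    using Rb_ge[OF n, of L] norm_ge_zero[of "qint L (of_nat m + of_nat n + 1)"] unfolding q_def by linarith
  have "cmod x * cmod q \<le> cmod x * Rb L m"
    using qR by (intro mult_left_mono) auto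
  also have "\<dots> < 1" using x R by (simp add: field_simps)
  finally have "cmod (x * q) < 1" by (simp add: norm_mult)
  then have D: "1 - x * q \<noteq> 0" by auto
  have sf: "f sums suminf f" unfolding f_def by (rule summable_sums[OF cseq_summable[OF x]])
  have fS: "f (Suc j) = x * q * f j + x * Q * (cseq L m \<mu> j (Suc n) * x ^ j)" for j
    unfolding f_def cseq_rec q_def Q_def by (simp add: algebra_simps)
  have "(\<lambda>j. f (Suc j)) sums (x * q * suminf f + x * Q * Gf L m \<mu> x (Suc n))"
    unfolding fS by (intro sums_add sums_mult sf step.IH)
  then have "f sums (x * q * suminf f + x * Q * Gf L m \<mu> x (Suc n) + f 0)"
    by (simp only: sums_Suc_iff)
  then have e: "suminf f = x * q * suminf f + x * Q * Gf L m \<mu> x (Suc n) + acoef L m \<mu> n"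
    using sf n by (simp add: sums_unique2 f_def cseq_0)
  have "suminf f * (1 - x * q) = acoef L m \<mu> n + x * Q * Gf L m \<mu> x (Suc n)"
    using e by (simp add: algebra_simps)
  also have "\<dots> = Gf L m \<mu> x n * (1 - x * q)"
    using Gf_rec[OF n, of x L \<mu>] D unfolding q_def Q_def by simp
  finally have "suminf f = Gf L m \<mu> x n" using D by simp
  then show ?case using sf unfolding f_def by simp
qed

lemma prod_qfall: "(\<Prod>t\<in>{0<..l}. qint L (of_nat m + of_nat t)) = qfall L (of_nat m + of_nat l) l"
proof (induction l)
  case 0 then show ?case by (simp add: qfall_def)
next
  case (Suc l)
  have s: "{0<..Suc l} = insert (Suc l) {0<..l}" by auto
  have "qfall L (of_nat m + of_nat (Suc l)) (Suc l)
     = qint L (of_nat m + of_nat (Suc l) - of_nat 0) * (\<Prod>i<l. qint L (of_nat m + of_nat (Suc l) - of_nat (Suc i)))"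
    unfolding qfall_def by (rule prod.lessThan_Suc_shift)
  also have "(\<Prod>i<l. qint L (of_nat m + of_nat (Suc l) - of_nat (Suc i))) = qfall L (of_nat m + of_nat l) l"
    unfolding qfall_def by (rule prod.cong) (simp_all add: add_diff_eq)
  finally show ?case unfolding s using Suc.IH by (subst prod.insert) simp_all
qed

lemma prod_den:
  "(\<Prod>t\<in>{0..l}. (1 - qpow L (-2 * lam) * qpow L (-2 * of_nat t))) = (\<Prod>i\<le>l. (1 - qpow L (- 2 * lam - 2 * of_nat i)))"
  unfolding atLeast0AtMost
  by (rule prod.cong, rule refl, subst qpow_split[of "- 2 * lam - 2 * of_nat _" "-2 * lam" "-2 * of_nat _"]) simp_all

lemma formula_eq:
  "qpow L (lam * \<mu>) * Gf L m \<mu> (qpow L (-2 * lam)) 0 = trace_formula L \<mu> m lam"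
proof -
  have t: "acoef L m \<mu> l * (\<Prod>t\<in>{0<..l}. qint L (of_nat m + of_nat t)) * qpow L (-2 * lam) ^ (l - 0)
      / (\<Prod>t\<in>{0..l}. (1 - qpow L (-2 * lam) * qpow L (-2 * of_nat t)))
    = (- 1) ^ l * qpow L (- 2 * lam * of_nat l)
        * qpow L (- (of_nat l * (of_nat l - 1) / 2))
        * (qfall L (of_nat m) l * qfall L (of_nat m + of_nat l) l / qfall L (of_nat l) l)
        * (qpow L 1 - qpow L (- 1)) ^ l
        / ((\<Prod>i<l. (1 - qpow L (- 2 * \<mu> + 2 * of_nat i)))
           * (\<Prod>i\<le>l. (1 - qpow L (- 2 * lam - 2 * of_nat i))))" for l
  proof -
    have x: "qpow L (- 2 * lam * of_nat l) = qpow L (-2 * lam) ^ l"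
      by (subst qpow_nat_mult[symmetric]) (simp add: ac_simps)
    show ?thesis unfolding x prod_qfall prod_den acoef_def diff_zero
      by (simp only: divide_inverse inverse_mult_distrib mult_ac)
  qed
  have "Gf L m \<mu> (qpow L (-2 * lam)) 0 = (\<Sum>l\<le>m. (- 1) ^ l * qpow L (- 2 * lam * of_nat l)
        * qpow L (- (of_nat l * (of_nat l - 1) / 2))
        * (qfall L (of_nat m) l * qfall L (of_nat m + of_nat l) l / qfall L (of_nat l) l)
        * (qpow L 1 - qpow L (- 1)) ^ l
        / ((\<Prod>i<l. (1 - qpow L (- 2 * \<mu> + 2 * of_nat i)))
           * (\<Prod>i\<le>l. (1 - qpow L (- 2 * lam - 2 * of_nat i)))))"
    unfolding Gf_def by (subst atLeast0AtMost) (rule sum.cong[OF refl t])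
  then show ?thesis unfolding trace_formula_def by (simp only:)
qed

context gen
begin

lemma trace_sums:
  assumes x: "cmod (qpow L (- 2 * lam)) < 1 / Rb L m"
  shows "trace_term L \<mu> m lam sums trace_formula L \<mu> m lam"
proof -
  have tt: "trace_term L \<mu> m lam j = cseq L m \<mu> j 0 * qpow L (-2 * lam) ^ j * qpow L (lam * \<mu>)" for j
  proof -
    have "qpow L (lam * (\<mu> - 2 * of_nat j)) = qpow L (lam * \<mu>) * qpow L (of_nat j * (-2 * lam))"
      by (rule qpow_split) (simp add: algebra_simps)
    then show ?thesis unfolding trace_term_def trig_eq cseq_def qpow_nat_mult by simp
  qed
  have "(\<lambda>j. cseq L m \<mu> j 0 * qpow L (-2 * lam) ^ j * qpow L (lam * \<mu>)) sums (Gf L m \<mu> (qpow L (-2 * lam)) 0 * qpow L (lam * \<mu>))"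
    by (rule sums_mult2[OF cseq_sums[OF x]]) simp
  then show ?thesis unfolding tt formula_eq[symmetric] by (simp add: mult.commute)
qed

end



theorem proposition7p2:
  fixes L :: complex and m :: nat
  assumes "\<not> algebraic (exp L)"
  shows "\<exists>S :: complex set. countable S \<and>
    (\<forall>\<mu>. \<mu> \<notin> S \<longrightarrow>
      (\<exists>\<epsilon>>0. \<forall>lam. cmod (qpow L (- 2 * lam)) < \<epsilon> \<longrightarrow>
         trace_term L \<mu> m lam sums trace_formula L \<mu> m lam))"
proof -
  define S where "S = {\<mu>. \<exists>k<m. exp (2 * (\<mu> - of_nat k) * L) = 1}"
  have L0: "L \<noteq> 0" using assms by auto
  have sub: "S \<subseteq> (\<lambda>(k, n). of_nat k + of_int n * pi * \<i> / L) ` (UNIV :: (nat \<times> int) set)"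
  proof
    fix \<mu> assume "\<mu> \<in> S"
    then obtain k where "exp (2 * (\<mu> - of_nat k) * L) = exp 0" unfolding S_def by auto
    then obtain n :: int where n: "2 * (\<mu> - of_nat k) * L = 0 + of_int (2 * n) * pi * \<i>"
      unfolding exp_eq by blast
    have "2 * ((\<mu> - of_nat k) * L) = 2 * (of_int n * pi * \<i>)"
      using n by (simp add: algebra_simps)
    then have n2: "(\<mu> - of_nat k) * L = of_int n * pi * \<i>" by simp
    have "\<mu> = of_nat k + of_int n * pi * \<i> / L"
      using n2 L0 by (simp add: field_simps)
    then show "\<mu> \<in> (\<lambda>(k, n). of_nat k + of_int n * pi * \<i> / L) ` (UNIV :: (nat \<times> int) set)"
      by (intro image_eqI[of _ _ "(k, n)"]) auto
  qed
  have cS: "countable S"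
    by (rule countable_subset[OF sub]) simp
  show ?thesis
  proof (rule exI[of _ S], intro conjI allI impI)
    show "countable S" by (rule cS)
  next
    fix \<mu> assume "\<mu> \<notin> S"
    then interpret gen L m \<mu>
      by unfold_locales (use assms S_def in auto)
    have R: "Rb L m > 0" using Rb_pos[of L m] by simp
    show "\<exists>\<epsilon>>0. \<forall>lam. cmod (qpow L (- 2 * lam)) < \<epsilon> \<longrightarrow>
         trace_term L \<mu> m lam sums trace_formula L \<mu> m lam"
      by (intro exI[of _ "1 / Rb L m"] conjI allI impI trace_sums) (use R in simp_all)
  qed
qed

end
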